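(* Let $\mathcal{A},\mathcal{B}$ be Hilbert spaces with $\dim\mathcal{A}=m$, $\dim\mathcal{B}=n$, $2\le m\le n$, with computational bases $\{|j\rangle\}$. Let $S=\operatorname{span}\{|j\rangle|k+1\rangle-|j+1\rangle|k\rangle : 0\le j\le m-2,\ 0\le k\le n-2\}\subseteq\mathcal{A}\otimes\mathcal{B}$. Then the orthogonal complement $S^\perp$ is strongly PPT-unextendible.
   Context: A bipartite positive semidefinite operator $E$ is PPT if its partial transpose $E^{T_B}$ (defined by $(|i\rangle\langle k|\otimes|j\rangle\langle l|)^{T_B}=|i\rangle\langle k|\otimes|l\rangle\langle j|$) is positive semidefinite. A subspace $V\subseteq\mathcal{A}\otimes\mathcal{B}$ is PPT-extendible if there exists a nonzero PPT operator whose support is contained in $V^\perp$; $V$ is strongly PPT-unextendible if for every positive integer $k$, $V^{\otimes k}\subseteq\mathcal{A}^{\otimes k}\otimes\mathcal{B}^{\otimes k}$ is not PPT-extendible (with respect to the bipartition $\mathcal{A}^{\otimes k}:\mathcal{B}^{\otimes k}$). *)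

theory Defs
  imports Complex_Main "HOL-Library.Complex_Order"
begin

text \<open>A vector of A (x) B (dim A = m, dim B = n) is a function
  nat \<times> nat \<Rightarrow> complex, coordinates w.r.t. the product basis |j>|l>, only the
  coordinates in the grid {..<m} \<times> {..<n} matter.
  A vector of A^(x)k (x) B^(x)k is a function on pairs (a,b) of index lists,
  a = (a_1..a_k) labelling |a_1>..|a_k> in A^(x)k and b likewise in B^(x)k.\<close>

type_synonym vec1 = "nat \<times> nat \<Rightarrow> complex"
type_synonym idx = "nat list \<times> nat list"
type_synonym vec = "idx \<Rightarrow> complex"
type_synonym op = "idx \<Rightarrow> idx \<Rightarrow> complex"

definition grid :: "nat \<Rightarrow> nat \<Rightarrow> (nat \<times> nat) set" where
  "grid m n = {..<m} \<times> {..<n}"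

definition idxs :: "nat \<Rightarrow> nat \<Rightarrow> nat \<Rightarrow> idx set" where
  "idxs m n k = {(a,b). length a = k \<and> length b = k \<and> set a \<subseteq> {..<m} \<and> set b \<subseteq> {..<n}}"

definition cspan :: "('x \<Rightarrow> complex) set \<Rightarrow> ('x \<Rightarrow> complex) set" where
  "cspan X = {u. \<exists>F c. finite F \<and> F \<subseteq> X \<and> u = (\<lambda>x. \<Sum>g\<in>F. c g * g x)}"

definition perp1 :: "nat \<Rightarrow> nat \<Rightarrow> vec1 set \<Rightarrow> vec1 set" where
  "perp1 m n W = {v. (\<forall>x. x \<notin> grid m n \<longrightarrow> v x = 0) \<and>
      (\<forall>w\<in>W. (\<Sum>x\<in>grid m n. cnj (w x) * v x) = 0)}"

definition gen :: "nat \<Rightarrow> nat \<Rightarrow> vec1" where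
  "gen j l = (\<lambda>x. (if x = (j, l+1) then 1 else 0) - (if x = (j+1, l) then 1 else 0))"

definition S_space :: "nat \<Rightarrow> nat \<Rightarrow> vec1 set" where
  "S_space m n = cspan {gen j l | j l. j \<le> m - 2 \<and> l \<le> n - 2}"

text \<open>k-th tensor power V^(x)k, viewed inside A^(x)k (x) B^(x)k:
  v_1 (x) ... (x) v_k has coordinate prod_i v_i(a_i,b_i) at (a,b).\<close>
definition tprod :: "vec1 list \<Rightarrow> vec" where
  "tprod vs = (\<lambda>(a,b). \<Prod>i<length vs. (vs ! i) (a ! i, b ! i))"

definition tpow :: "nat \<Rightarrow> vec1 set \<Rightarrow> vec set" where
  "tpow k V = cspan {tprod vs | vs. length vs = k \<and> set vs \<subseteq> V}"

definition inner_on :: "idx set \<Rightarrow> vec \<Rightarrow> vec \<Rightarrow> complex" where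
  "inner_on I u v = (\<Sum>x\<in>I. cnj (u x) * v x)"

definition apply_op :: "idx set \<Rightarrow> op \<Rightarrow> vec \<Rightarrow> vec" where
  "apply_op I E w = (\<lambda>x. \<Sum>y\<in>I. E x y * w y)"

definition psd :: "idx set \<Rightarrow> op \<Rightarrow> bool" where
  "psd I E \<longleftrightarrow> (\<forall>x y. x \<notin> I \<or> y \<notin> I \<longrightarrow> E x y = 0) \<and>
     (\<forall>v. inner_on I v (apply_op I E v) \<ge> 0)"

text \<open>Partial transpose on the B^(x)k factor:
  (|a><a'| (x) |b><b'|)^T_B = |a><a'| (x) |b'><b|.\<close>
definition ptrans :: "op \<Rightarrow> op" where
  "ptrans E = (\<lambda>(a,b) (a',b'). E (a,b') (a',b))"

definition ppt :: "idx set \<Rightarrow> op \<Rightarrow> bool" where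
  "ppt I E \<longleftrightarrow> psd I E \<and> psd I (ptrans E)"

definition supp_in_perp :: "idx set \<Rightarrow> op \<Rightarrow> vec set \<Rightarrow> bool" where
  "supp_in_perp I E V \<longleftrightarrow> (\<forall>w. \<forall>v\<in>V. inner_on I v (apply_op I E w) = 0)"

definition ppt_extendible :: "idx set \<Rightarrow> vec set \<Rightarrow> bool" where
  "ppt_extendible I V \<longleftrightarrow> (\<exists>E. ppt I E \<and> E \<noteq> (\<lambda>_ _. 0) \<and> supp_in_perp I E V)"

definition strongly_ppt_unextendible :: "nat \<Rightarrow> nat \<Rightarrow> vec1 set \<Rightarrow> bool" where
  "strongly_ppt_unextendible m n V \<longleftrightarrow>
     (\<forall>k\<ge>1. \<not> ppt_extendible (idxs m n k) (tpow k V))"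

end

theory Submission
  imports Defs
begin

lemma poly_group_zero:
  fixes c :: "'s \<Rightarrow> complex" and h :: "'s \<Rightarrow> nat" and X :: "complex set"
  assumes fS: "finite S" and inf: "infinite X" and z: "\<forall>x\<in>X. (\<Sum>s\<in>S. c s * x ^ h s) = 0"
  shows "(\<Sum>s\<in>{s\<in>S. h s = i}. c s) = 0"
proof -
  define N where "N = sum h S"
  define d where "d i = (\<Sum>s\<in>{s\<in>S. h s = i}. c s)" for i
  have hN: "h ` S \<subseteq> {..N}" using fS by (auto simp: N_def intro: member_le_sum)
  have eq: "(\<Sum>s\<in>S. c s * x ^ h s) = (\<Sum>i\<le>N. d i * x ^ i)" for x
  proof -
    have "(\<Sum>s\<in>S. c s * x ^ h s) = (\<Sum>i\<le>N. \<Sum>s\<in>{s\<in>S. h s = i}. c s * x ^ h s)"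
      using sum.group[OF fS _ hN, of "\<lambda>s. c s * x ^ h s"] by simp
    also have "\<dots> = (\<Sum>i\<le>N. d i * x ^ i)"
      unfolding d_def sum_distrib_right by (intro sum.cong refl) auto
    finally show ?thesis .
  qed
  show ?thesis
  proof (cases "i \<le> N")
    case True
    have "X \<subseteq> {x. (\<Sum>i\<le>N. d i * x ^ i) = 0}" using z eq by auto
    hence "infinite {x. (\<Sum>i\<le>N. d i * x ^ i) = 0}" using inf finite_subset by blast
    hence "\<forall>i\<le>N. d i = 0" using polyfun_finite_roots[where n=N and c=d] by blast
    thus ?thesis using True d_def by simp
  next
    case False
    hence "{s\<in>S. h s = i} = {}" using hN by auto
    thus ?thesis by (metis sum.empty)
  qed
qed

lemma poly_inj_zero:
  fixes c :: "'s \<Rightarrow> complex" and h :: "'s \<Rightarrow> nat" and X :: "complex set"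
  assumes fS: "finite S" and inf: "infinite X" and z: "\<forall>x\<in>X. (\<Sum>s\<in>S. c s * x ^ h s) = 0"
    and inj: "inj_on h S" and s: "s \<in> S"
  shows "c s = 0"
proof -
  have "{t\<in>S. h t = h s} = {s}" using inj s by (auto dest: inj_onD)
  thus ?thesis using poly_group_zero[OF fS inf z, of "h s"] by simp
qed

lemma circle_infinite: "infinite ((\<lambda>x. Complex x (sqrt (1 - x\<^sup>2))) ` {-1..(1::real)})"
proof
  assume f: "finite ((\<lambda>x. Complex x (sqrt (1 - x\<^sup>2))) ` {-1..(1::real)})"
  have "inj_on (\<lambda>x. Complex x (sqrt (1 - x\<^sup>2))) {-1..(1::real)}"
    by (auto intro!: inj_onI)
  hence "finite {-1..(1::real)}" using f finite_image_iff by blast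
  thus False using infinite_Icc[of "-1::real" 1] by simp
qed

lemma circle_unit:
  assumes "x \<in> {-1..(1::real)}"
  shows "cnj (Complex x (sqrt (1 - x\<^sup>2))) * Complex x (sqrt (1 - x\<^sup>2)) = 1"
proof -
  have "1 - x\<^sup>2 \<ge> 0" using assms by (auto simp: abs_square_le_1)
  hence "(sqrt (1 - x\<^sup>2))\<^sup>2 = 1 - x\<^sup>2" by simp
  thus ?thesis by (simp add: complex_eq_iff power2_eq_square)
qed

lemma mono1_zero:
  fixes c :: "nat \<times> nat \<Rightarrow> complex"
  assumes z: "\<forall>z::complex. (\<Sum>s\<in>grid m n. c s * (z ^ fst s * cnj z ^ snd s)) = 0"
    and s: "s \<in> grid m n"
  shows "c s = 0"
proof -
  define C where "C = (\<lambda>x. Complex x (sqrt (1 - x\<^sup>2))) ` {-1..(1::real)}"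
  define h where "h s = fst s + n - snd s" for s :: "nat \<times> nat"
  have fin: "finite (grid m n)" by (simp add: grid_def)
  have step1: "(\<Sum>t\<in>{t\<in>grid m n. h t = e}. c t * of_real r ^ (fst t + snd t)) = 0"
    if r: "r > 0" for r e
  proof -
    have "\<forall>w\<in>C. (\<Sum>t\<in>grid m n. (c t * of_real r ^ (fst t + snd t)) * w ^ h t) = 0"
    proof
      fix w assume w: "w \<in> C"
      have u: "cnj w * w = 1" using w circle_unit by (auto simp: C_def)
      have "(\<Sum>t\<in>grid m n. (c t * of_real r ^ (fst t + snd t)) * w ^ h t)
          = (\<Sum>t\<in>grid m n. c t * ((of_real r * w) ^ fst t * cnj (of_real r * w) ^ snd t)) * w ^ n"
        unfolding sum_distrib_right
      proof (rule sum.cong[OF refl])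
        fix t assume t: "t \<in> grid m n"
        hence ln: "snd t \<le> n" by (auto simp: grid_def)
        have wn: "w ^ n = w ^ snd t * w ^ (n - snd t)"
          using ln by (simp add: power_add[symmetric])
        have "cnj w ^ snd t * w ^ snd t = 1" using u by (simp add: power_mult_distrib[symmetric])
        hence "cnj w ^ snd t * w ^ n = w ^ (n - snd t)" using wn by (metis mult.assoc mult_1)
        moreover have "h t = fst t + (n - snd t)" using ln by (simp add: h_def)
        ultimately show "(c t * of_real r ^ (fst t + snd t)) * w ^ h t
          = c t * ((of_real r * w) ^ fst t * cnj (of_real r * w) ^ snd t) * w ^ n"
          by (simp add: power_mult_distrib power_add algebra_simps)
      qed
      also have "\<dots> = 0" using z[rule_format, of "of_real r * w"] by simp
      finally show "(\<Sum>t\<in>grid m n. (c t * of_real r ^ (fst t + snd t)) * w ^ h t) = 0" .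
    qed
    from poly_group_zero[OF fin _ this, of e] circle_infinite
    show ?thesis by (simp add: C_def)
  qed
  define S where "S = {t\<in>grid m n. h t = h s}"
  have "\<forall>x\<in>of_real ` {0<..}. (\<Sum>t\<in>S. c t * x ^ (fst t + snd t)) = 0"
    using step1 by (auto simp: S_def)
  moreover have "infinite (of_real ` {0<..} :: complex set)"
    using infinite_Ioi[of "0::real"] finite_imageD inj_of_real inj_on_subset by blast
  moreover have "inj_on (\<lambda>t. fst t + snd t) S"
    by (rule inj_onI) (auto simp: S_def h_def grid_def prod_eq_iff)
  moreover have "finite S" using fin by (simp add: S_def)
  ultimately show ?thesis using poly_inj_zero[of S _ c "\<lambda>t. fst t + snd t" s] s
    by (auto simp: S_def)
qed

definition Am :: "(nat \<Rightarrow> complex) \<Rightarrow> nat list \<Rightarrow> complex" where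
  "Am z a = (\<Prod>i<length a. z i ^ (a ! i))"

lemma Am_Cons: "Am z (j # a) = z 0 ^ j * Am (\<lambda>i. z (Suc i)) a"
  unfolding Am_def by (simp only: length_Cons prod.lessThan_Suc_shift) simp

lemma idxs_0: "idxs m n 0 = {([],[])}"
  by (auto simp: idxs_def)

lemma idxs_Suc: "idxs m n (Suc k) = (\<lambda>(s,t). (fst s # fst t, snd s # snd t)) ` (grid m n \<times> idxs m n k)"
proof
  show "idxs m n (Suc k) \<subseteq> (\<lambda>(s,t). (fst s # fst t, snd s # snd t)) ` (grid m n \<times> idxs m n k)"
  proof
    fix x assume x: "x \<in> idxs m n (Suc k)"
    then obtain a b where ab: "x = (a,b)" "length a = Suc k" "length b = Suc k"
      "set a \<subseteq> {..<m}" "set b \<subseteq> {..<n}" by (auto simp: idxs_def)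
    then obtain j a' l b' where "a = j # a'" "b = l # b'"
      by (metis length_Suc_conv)
    with ab show "x \<in> (\<lambda>(s,t). (fst s # fst t, snd s # snd t)) ` (grid m n \<times> idxs m n k)"
      by (auto simp: idxs_def grid_def image_iff intro!: bexI[of _ "((j,l),(a',b'))"])
  qed
next
  show "(\<lambda>(s,t). (fst s # fst t, snd s # snd t)) ` (grid m n \<times> idxs m n k) \<subseteq> idxs m n (Suc k)"
    by (auto simp: idxs_def grid_def)
qed

lemma idxs_inj: "inj_on (\<lambda>(s,t). (fst s # fst t, snd s # snd t)) X"
  by (rule inj_onI) (auto simp: prod_eq_iff)

lemma finite_idxs: "finite (idxs m n k)"
  by (induction k) (auto simp: idxs_0 idxs_Suc grid_def)

lemma sum_idxs_Suc:
  "(\<Sum>x\<in>idxs m n (Suc k). f x) = (\<Sum>s\<in>grid m n. \<Sum>t\<in>idxs m n k. f (fst s # fst t, snd s # snd t))"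
proof -
  have "(\<Sum>x\<in>idxs m n (Suc k). f x) = (\<Sum>p\<in>grid m n \<times> idxs m n k. f (fst (fst p) # fst (snd p), snd (fst p) # snd (snd p)))"
    unfolding idxs_Suc by (subst sum.reindex[OF idxs_inj]) (simp add: case_prod_beta)
  also have "\<dots> = (\<Sum>s\<in>grid m n. \<Sum>t\<in>idxs m n k. f (fst s # fst t, snd s # snd t))"
    by (subst sum.cartesian_product) (simp add: case_prod_beta)
  finally show ?thesis .
qed

lemma monok_zero:
  "\<forall>z. (\<Sum>x\<in>idxs m n k. c x * (Am z (fst x) * cnj (Am z (snd x)))) = 0 \<Longrightarrow> x \<in> idxs m n k \<Longrightarrow> c x = 0"
proof (induction k arbitrary: c x)
  case 0
  then show ?case by (simp add: idxs_0 Am_def)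
next
  case (Suc k)
  define G where "G s z' = (\<Sum>t\<in>idxs m n k. c (fst s # fst t, snd s # snd t) * (Am z' (fst t) * cnj (Am z' (snd t))))" for s z'
  have G0: "G s z' = 0" if s: "s \<in> grid m n" for s z'
  proof -
    have "\<forall>w. (\<Sum>s\<in>grid m n. G s z' * (w ^ fst s * cnj w ^ snd s)) = 0"
    proof
      fix w
      define z where "z = case_nat w z'"
      have zs: "(\<lambda>i. z (Suc i)) = z'" by (simp add: z_def)
      have "(\<Sum>s\<in>grid m n. G s z' * (w ^ fst s * cnj w ^ snd s))
          = (\<Sum>x\<in>idxs m n (Suc k). c x * (Am z (fst x) * cnj (Am z (snd x))))"
        unfolding sum_idxs_Suc G_def sum_distrib_right
        by (intro sum.cong refl) (simp add: Am_Cons zs z_def algebra_simps)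
      also have "\<dots> = 0" using Suc.prems(1) by blast
      finally show "(\<Sum>s\<in>grid m n. G s z' * (w ^ fst s * cnj w ^ snd s)) = 0" .
    qed
    thus ?thesis using mono1_zero[of "\<lambda>s. G s z'"] s by blast
  qed
  from Suc.prems(2) obtain s t where st: "s \<in> grid m n" "t \<in> idxs m n k"
    "x = (fst s # fst t, snd s # snd t)" unfolding idxs_Suc by auto
  have "c (fst s # fst t, snd s # snd t) = 0"
    using Suc.IH[of "\<lambda>t. c (fst s # fst t, snd s # snd t)" t] G0[OF st(1)] st(2)
    unfolding G_def by blast
  thus ?case using st by simp
qed

lemma quad_expand:
  "inner_on I (\<lambda>x. u x + s * w x) (apply_op I E (\<lambda>x. u x + s * w x)) =
   inner_on I u (apply_op I E u) + cnj s * inner_on I w (apply_op I E u)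
   + s * inner_on I u (apply_op I E w) + cnj s * s * inner_on I w (apply_op I E w)"
proof -
  have ap: "apply_op I E (\<lambda>x. u x + s * w x) = (\<lambda>x. apply_op I E u x + s * apply_op I E w x)"
    by (simp add: apply_op_def algebra_simps sum.distrib sum_distrib_left)
  show ?thesis unfolding ap inner_on_def
    by (simp add: algebra_simps sum.distrib sum_distrib_left)
qed

lemma psd_null:
  assumes psd: "psd I E" and fin: "finite I" and q0: "inner_on I v (apply_op I E v) = 0"
    and y: "y \<in> I"
  shows "apply_op I E v y = 0"
proof -
  define w where "w = apply_op I E v"
  define N where "N = inner_on I w w"
  define B where "B = inner_on I v (apply_op I E w)"
  define Q where "Q = inner_on I w (apply_op I E w)"
  have pos: "0 \<le> inner_on I u (apply_op I E u)" for u using psd by (simp add: psd_def)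
  have ex: "0 \<le> cnj s * N + s * B + cnj s * s * Q" for s
    using pos[of "\<lambda>x. v x + s * w x"] unfolding quad_expand q0 N_def B_def Q_def w_def by simp
  have Q0: "0 \<le> Q" using pos[of w] by (simp add: Q_def)
  have NRe: "Re N = (\<Sum>x\<in>I. (cmod (w x))\<^sup>2)" and NIm: "Im N = 0"
  proof -
    have "cnj (w x) * w x = of_real ((cmod (w x))\<^sup>2)" for x
      using complex_mult_cnj[of "w x"] by (simp add: mult.commute cmod_def)
    hence "N = of_real (\<Sum>x\<in>I. (cmod (w x))\<^sup>2)" by (simp add: N_def inner_on_def)
    thus "Re N = (\<Sum>x\<in>I. (cmod (w x))\<^sup>2)" "Im N = 0" by simp_all
  qed
  have e1: "0 \<le> cnj (- \<i>) * N + (- \<i>) * B + cnj (- \<i>) * (- \<i>) * Q" by (rule ex)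
  have ReB: "Re B = Re N" using e1 Q0 NIm by (simp add: less_eq_complex_def)
  have e2: "0 \<le> - of_real t * N - of_real t * B + of_real t * of_real t * Q" for t :: real
    using ex[of "- of_real t"] by simp
  have e3: "0 \<le> -2 * t * Re N + t * t * Re Q" for t :: real
    using e2[of t] ReB by (simp add: less_eq_complex_def)
  define a where "a = Re N"
  define q where "q = Re Q"
  have q0': "q \<ge> 0" using Q0 by (simp add: q_def less_eq_complex_def)
  define t where "t = a / (q + 1)"
  have "0 \<le> -2 * t * a + t * t * q" using e3[of t] by (simp add: a_def q_def)
  hence "0 \<le> (q+1)^2 * (-2 * t * a + t * t * q)" using q0' by simp
  also have "(q+1)^2 * (-2 * t * a + t * t * q) = - (a * a) * (q + 2)"
  proof -
    have qq: "q + 1 \<noteq> 0" using q0' by simp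
    have ht: "t * (q+1) = a" using qq by (simp add: t_def)
    have "(q+1)^2 * (-2 * t * a + t * t * q) = -2*a*(t*(q+1))*(q+1) + (t*(q+1))*(t*(q+1))*q"
      by (simp add: power2_eq_square algebra_simps)
    also have "\<dots> = - (a * a) * (q + 2)" unfolding ht by (simp add: algebra_simps)
    finally show ?thesis .
  qed
  finally have "a * a * (q + 2) \<le> 0" by simp
  moreover have "q + 2 > 0" using q0' by simp
  ultimately have "\<not> a * a > 0" using mult_pos_pos[of "a*a" "q+2"] by linarith
  hence "a = 0" using not_real_square_gt_zero by blast
  hence "(\<Sum>x\<in>I. (cmod (w x))\<^sup>2) = 0" using NRe a_def by simp
  hence "(cmod (w y))\<^sup>2 = 0"
    using sum_nonneg_eq_0_iff[OF fin, of "\<lambda>x. (cmod (w x))\<^sup>2"] y by simp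
  thus ?thesis by (simp add: w_def)
qed

definition phi :: "nat \<Rightarrow> nat \<Rightarrow> complex \<Rightarrow> vec1" where
  "phi m n x = (\<lambda>(j,l). if (j,l) \<in> grid m n then x ^ (j + l) else 0)"

lemma phi_in:
  assumes "2 \<le> m" "m \<le> n"
  shows "phi m n x \<in> perp1 m n (S_space m n)"
proof -
  have gen0: "(\<Sum>y\<in>grid m n. cnj (gen j l y) * phi m n x y) = 0"
    if "j \<le> m - 2" "l \<le> n - 2" for j l
  proof -
    have g1: "(j, l+1) \<in> grid m n" and g2: "(j+1, l) \<in> grid m n"
      using that assms by (auto simp: grid_def)
    have "(\<Sum>y\<in>grid m n. cnj (gen j l y) * phi m n x y)
        = (\<Sum>y\<in>grid m n. (if y = (j, l+1) then phi m n x y else 0) - (if y = (j+1, l) then phi m n x y else 0))"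
      by (intro sum.cong refl) (auto simp: gen_def)
    also have "\<dots> = phi m n x (j, l+1) - phi m n x (j+1, l)"
      using g1 g2 by (simp add: sum_subtractf grid_def)
    also have "\<dots> = 0" using g1 g2 by (simp add: phi_def)
    finally show ?thesis .
  qed
  show ?thesis unfolding perp1_def
  proof (intro CollectI conjI allI impI ballI)
    fix y assume "y \<notin> grid m n" thus "phi m n x y = 0" by (cases y) (auto simp: phi_def)
  next
    fix w assume "w \<in> S_space m n"
    then obtain F c where F: "finite F" "F \<subseteq> {gen j l | j l. j \<le> m - 2 \<and> l \<le> n - 2}"
      "w = (\<lambda>y. \<Sum>g\<in>F. c g * g y)" by (auto simp: S_space_def cspan_def)
    have "(\<Sum>y\<in>grid m n. cnj (w y) * phi m n x y)
        = (\<Sum>g\<in>F. cnj (c g) * (\<Sum>y\<in>grid m n. cnj (g y) * phi m n x y))"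
    proof -
      have "(\<Sum>y\<in>grid m n. cnj (w y) * phi m n x y)
          = (\<Sum>y\<in>grid m n. \<Sum>g\<in>F. cnj (c g) * (cnj (g y) * phi m n x y))"
        unfolding F(3) by (simp add: sum_distrib_right mult.assoc)
      also have "\<dots> = (\<Sum>g\<in>F. \<Sum>y\<in>grid m n. cnj (c g) * (cnj (g y) * phi m n x y))"
        by (rule sum.swap)
      also have "\<dots> = (\<Sum>g\<in>F. cnj (c g) * (\<Sum>y\<in>grid m n. cnj (g y) * phi m n x y))"
        by (simp add: sum_distrib_left)
      finally show ?thesis .
    qed
    also have "\<dots> = 0"
      using F(2) gen0 by (intro sum.neutral) auto
    finally show "(\<Sum>y\<in>grid m n. cnj (w y) * phi m n x y) = 0" .
  qed
qed

lemma tprod_in: "length vs = k \<Longrightarrow> set vs \<subseteq> V \<Longrightarrow> tprod vs \<in> tpow k V"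
  unfolding tpow_def cspan_def
  by (rule CollectI, rule exI[of _ "{tprod vs}"], rule exI[of _ "\<lambda>_. 1"]) auto

lemma p_val:
  assumes "x \<in> idxs m n k"
  shows "tprod (map (\<lambda>i. phi m n (z i)) [0..<k]) x = Am z (fst x) * Am z (snd x)"
proof -
  obtain a b where ab: "x = (a,b)" "length a = k" "length b = k" "set a \<subseteq> {..<m}" "set b \<subseteq> {..<n}"
    using assms by (auto simp: idxs_def)
  have "tprod (map (\<lambda>i. phi m n (z i)) [0..<k]) x = (\<Prod>i<k. (map (\<lambda>i. phi m n (z i)) [0..<k] ! i) (a ! i, b ! i))"
    unfolding tprod_def ab(1) by (simp only: case_prod_conv length_map length_upt diff_zero)
  also have "\<dots> = (\<Prod>i<k. z i ^ (a ! i) * z i ^ (b ! i))"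
  proof (rule prod.cong[OF refl])
    fix i assume i: "i \<in> {..<k}"
    hence ia: "i < length a" "i < length b" using ab by auto
    hence "a ! i \<in> set a" "b ! i \<in> set b" by simp_all
    hence "a ! i < m" "b ! i < n" using ab(4,5) by auto
    hence g: "(a ! i, b ! i) \<in> grid m n" by (simp add: grid_def)
    have "map (\<lambda>i. phi m n (z i)) [0..<k] ! i = phi m n (z i)" using i by simp
    thus "(map (\<lambda>i. phi m n (z i)) [0..<k] ! i) (a ! i, b ! i) = z i ^ (a ! i) * z i ^ (b ! i)"
      using g by (simp add: phi_def power_add)
  qed
  also have "\<dots> = Am z (fst x) * Am z (snd x)"
    by (simp add: Am_def ab prod.distrib)
  finally show ?thesis .
qed

lemma swap_sum:
  "(\<Sum>x\<in>idxs m n k. \<Sum>y\<in>idxs m n k. f x y) = (\<Sum>x\<in>idxs m n k. \<Sum>y\<in>idxs m n k. f (fst x, snd y) (fst y, snd x))"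
proof -
  let ?I = "idxs m n k"
  let ?s = "\<lambda>(x::idx,y::idx). ((fst x, snd y), (fst y, snd x))"
  have "(\<Sum>x\<in>?I. \<Sum>y\<in>?I. f x y) = (\<Sum>p\<in>?I \<times> ?I. f (fst p) (snd p))"
    by (simp add: sum.cartesian_product case_prod_beta)
  also have "\<dots> = (\<Sum>p\<in>?I \<times> ?I. f (fst (?s p)) (snd (?s p)))"
    by (rule sum.reindex_bij_witness[of _ ?s ?s]) (auto simp: idxs_def)
  also have "\<dots> = (\<Sum>x\<in>?I. \<Sum>y\<in>?I. f (fst x, snd y) (fst y, snd x))"
    by (simp add: sum.cartesian_product case_prod_beta)
  finally show ?thesis .
qed

theorem theorem3:
  fixes m n :: nat
  assumes "2 \<le> m" and "m \<le> n"
  shows "strongly_ppt_unextendible m n (perp1 m n (S_space m n))"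
  unfolding strongly_ppt_unextendible_def ppt_extendible_def
proof (intro allI impI notI)
  fix k :: nat
  assume "\<exists>E. ppt (idxs m n k) E \<and> E \<noteq> (\<lambda>_ _. 0) \<and> supp_in_perp (idxs m n k) E (tpow k (perp1 m n (S_space m n)))"
  then obtain E where pptE: "ppt (idxs m n k) E" and E0: "E \<noteq> (\<lambda>_ _. 0)"
    and supp: "supp_in_perp (idxs m n k) E (tpow k (perp1 m n (S_space m n)))" by blast
  define I where "I = idxs m n k"
  define P where "P = ptrans E"
  have psdP: "psd I P" using pptE by (simp add: ppt_def P_def I_def)
  define p where "p z = tprod (map (\<lambda>i. phi m n (z i)) [0..<k])" for z
  define u where "u z x = Am z (fst x) * cnj (Am z (snd x))" for z and x :: idx
  have qE: "inner_on I (p z) (apply_op I E (p z)) = 0" for z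
  proof -
    have "p z \<in> tpow k (perp1 m n (S_space m n))"
      unfolding p_def by (rule tprod_in) (auto intro: phi_in[OF assms])
    thus ?thesis using supp unfolding supp_in_perp_def I_def by blast
  qed
  have qP: "inner_on I (u z) (apply_op I P (u z)) = 0" for z
  proof -
    have "inner_on I (u z) (apply_op I P (u z)) = (\<Sum>x\<in>I. \<Sum>y\<in>I. cnj (u z x) * P x y * u z y)"
      by (simp add: inner_on_def apply_op_def sum_distrib_left mult.assoc)
    also have "\<dots> = (\<Sum>x\<in>I. \<Sum>y\<in>I. cnj (u z (fst x, snd y)) * P (fst x, snd y) (fst y, snd x) * u z (fst y, snd x))"
      unfolding I_def by (rule swap_sum)
    also have "\<dots> = (\<Sum>x\<in>I. \<Sum>y\<in>I. cnj (p z x) * E x y * p z y)"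
    proof (intro sum.cong refl)
      fix x y assume x: "x \<in> I" and y: "y \<in> I"
      have px: "p z x = Am z (fst x) * Am z (snd x)" and py: "p z y = Am z (fst y) * Am z (snd y)"
        using p_val x y unfolding p_def I_def by blast+
      show "cnj (u z (fst x, snd y)) * P (fst x, snd y) (fst y, snd x) * u z (fst y, snd x) = cnj (p z x) * E x y * p z y"
      proof -
        have "P (fst x, snd y) (fst y, snd x) = E x y" by (simp add: P_def ptrans_def)
        thus ?thesis unfolding px py u_def by (simp only: fst_conv snd_conv complex_cnj_mult complex_cnj_cnj mult_ac)
      qed
    qed
    also have "\<dots> = inner_on I (p z) (apply_op I E (p z))"
      by (simp add: inner_on_def apply_op_def sum_distrib_left mult.assoc)
    finally show ?thesis using qE by simp
  qed
  have Pz: "P y x = 0" for x y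
  proof (cases "x \<in> I \<and> y \<in> I")
    case True
    have "\<forall>z. (\<Sum>x\<in>idxs m n k. P y x * (Am z (fst x) * cnj (Am z (snd x)))) = 0"
    proof
      fix z
      have finI: "finite I" unfolding I_def by (rule finite_idxs)
      have yI: "y \<in> I" using True by blast
      have "apply_op I P (u z) y = 0"
        by (rule psd_null[OF psdP finI qP yI])
      thus "(\<Sum>x\<in>idxs m n k. P y x * (Am z (fst x) * cnj (Am z (snd x)))) = 0"
        unfolding apply_op_def u_def I_def by simp
    qed
    moreover have "x \<in> idxs m n k" using True unfolding I_def by blast
    ultimately show ?thesis using monok_zero[where c="P y" and m=m and n=n and k=k and x=x] by blast
  next
    case False
    moreover have "\<forall>x y. x \<notin> I \<or> y \<notin> I \<longrightarrow> P x y = 0" using psdP unfolding psd_def by blast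
    ultimately show ?thesis by blast
  qed
  have "E = (\<lambda>_ _. 0)"
  proof (intro ext)
    fix x y :: idx
    have "E x y = P (fst x, snd y) (fst y, snd x)" by (simp add: P_def ptrans_def)
    thus "E x y = 0" using Pz by simp
  qed
  thus False using E0 by simp
qed

end
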